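(* For any $x_0\in\mathbb R^N$ and any $R>0$ there exists $\phi\in C^2_c(\mathbb R^N)$ with $\mathrm{supp}(\phi)\subset B_{2R}(x_0)$, $\phi\equiv1$ on $B_R(x_0)$, $0\le\phi\le1$, such that $$\phi^{-\frac m{1-m}}(x)\,|\mathcal L_{\gamma,\beta}(\phi)(x)|^{\frac1{1-m}}\le\kappa_{10}\big(\rho^{\gamma,\beta}_{x_0}(R)\big)^{-\frac1{1-m}}\quad\text{for all }x\in\mathbb R^N,$$ where $\kappa_{10}>0$ depends only on $N,\gamma,\beta,m$.
   Context: $N\ge3$, $m\in(0,1)$, and $\gamma,\beta\in\mathbb R$ satisfy $\gamma<N$ and $\gamma-2<\beta\le\frac{N-2}{N}\gamma$. $\mathcal L_{\gamma,\beta}f=|x|^\gamma\nabla\cdot(|x|^{-\beta}\nabla f)$, which for smooth $f$ equals $|x|^{\gamma-\beta}[\Delta f-\beta\frac{x}{|x|^2}\cdot\nabla f]$. $\rho^{\gamma,\beta}_{x_0}(R)=\big(\int_{B_R(x_0)}|x|^{(\beta-\gamma)N/2}dx\big)^{2/N}$. The left-hand side is understood to be $0$ where $\mathcal L_{\gamma,\beta}(\phi)=0$ (in particular outside the support of $\phi$). *)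

theory Defs
  imports "HOL-Analysis.Analysis"
begin

text \<open>Space R^N is modelled as real^'n, with N = CARD('n).\<close>

definition grad :: "(real^'n \<Rightarrow> real) \<Rightarrow> real^'n \<Rightarrow> real^'n" where
  "grad f x = (\<chi> i. frechet_derivative f (at x) (axis i 1))"

definition hess_entry :: "(real^'n \<Rightarrow> real) \<Rightarrow> 'n \<Rightarrow> 'n \<Rightarrow> real^'n \<Rightarrow> real" where
  "hess_entry f i j x = frechet_derivative (\<lambda>y. grad f y $ i) (at x) (axis j 1)"

definition laplacian :: "(real^'n \<Rightarrow> real) \<Rightarrow> real^'n \<Rightarrow> real" where
  "laplacian f x = (\<Sum>i\<in>UNIV. hess_entry f i i x)"

definition C2 :: "(real^'n \<Rightarrow> real) \<Rightarrow> bool" where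
  "C2 f \<longleftrightarrow> (\<forall>x. f differentiable (at x)) \<and> (\<forall>x. grad f differentiable (at x)) \<and>
     (\<forall>i j. continuous_on UNIV (hess_entry f i j))"

definition L_op :: "real \<Rightarrow> real \<Rightarrow> (real^'n \<Rightarrow> real) \<Rightarrow> real^'n \<Rightarrow> real" where
  "L_op \<gamma> \<beta> f x = norm x powr (\<gamma> - \<beta>) *
      (laplacian f x - \<beta> * ((inverse ((norm x)\<^sup>2) *\<^sub>R x) \<bullet> grad f x))"

definition rho :: "real \<Rightarrow> real \<Rightarrow> real^'n \<Rightarrow> real \<Rightarrow> real" where
  "rho \<gamma> \<beta> x0 R = (integral (ball x0 R) (\<lambda>x. norm x powr ((\<beta> - \<gamma>) * real CARD('n) / 2)))
      powr (2 / real CARD('n))"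

end

theory Submission
  imports Defs
begin
definition pp :: "nat \<Rightarrow> real \<Rightarrow> real" where "pp n s = (max 0 s)^n"

lemma pp_deriv0:
  assumes n: "2 \<le> n"
  shows "(pp n has_real_derivative (real n * pp (n-1) s)) (at s)"
proof (cases "s < 0")
  case True
  have ev: "eventually (\<lambda>y. pp n y = 0) (nhds s)"
    using eventually_nhds_in_open[of "{..<0}" s] True n
    by (auto simp: pp_def elim!: eventually_mono intro: max_absorb1)
  have "((\<lambda>y. 0::real) has_real_derivative 0) (at s)" by simp
  moreover have "real n * pp (n-1) s = 0" using True n by (simp add: pp_def)
  ultimately show ?thesis using ev
    by (subst DERIV_cong_ev[of s s "pp n" "\<lambda>_. 0"]) (auto elim: eventually_mono)
next
  case False
  show ?thesis
  proof (cases "s > 0")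
    case True
    have ev: "eventually (\<lambda>y. pp n y = y^n) (nhds s)"
      using eventually_nhds_in_open[of "{0<..}" s] True
      by (auto simp: pp_def elim!: eventually_mono)
    have "((\<lambda>y. y^n) has_real_derivative (real n * s^(n-1))) (at s)"
      by (rule derivative_eq_intros refl)+ simp
    moreover have "real n * pp (n-1) s = real n * s^(n-1)" using True by (simp add: pp_def)
    ultimately show ?thesis using ev
      by (subst DERIV_cong_ev[of s s "pp n" "\<lambda>y. y^n"]) (auto elim: eventually_mono)
  next
    case False
    with \<open>\<not> s < 0\<close> have s0: "s = 0" by simp
    have val: "real n * pp (n-1) s = 0" using s0 n by (simp add: pp_def)
    have "((\<lambda>y. (pp n y - pp n 0) / (y - 0)) \<longlongrightarrow> 0) (at 0)"
    proof (rule Lim_null_comparison)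
      have "\<forall>y. y \<noteq> 0 \<and> dist y 0 < 1 \<longrightarrow> norm ((pp n y - pp n 0) / (y - 0)) \<le> \<bar>y\<bar>"
      proof (intro allI impI)
        fix y :: real assume "y \<noteq> 0 \<and> dist y 0 < 1"
        hence y: "y \<noteq> 0" "\<bar>y\<bar> < 1" by auto
        have a: "\<bar>max 0 y\<bar> \<le> \<bar>y\<bar>" by auto
        have "\<bar>max 0 y\<bar>^n \<le> \<bar>y\<bar>^n" by (rule power_mono[OF a]) simp
        also have "\<bar>y\<bar>^n \<le> \<bar>y\<bar>^2" using y n by (intro power_decreasing) auto
        finally have "\<bar>pp n y\<bar> \<le> \<bar>y\<bar> * \<bar>y\<bar>" by (simp add: pp_def power2_eq_square power_abs)
        moreover have "pp n 0 = 0" using n by (simp add: pp_def)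
        ultimately show "norm ((pp n y - pp n 0) / (y - 0)) \<le> \<bar>y\<bar>"
          using y by (simp add: divide_le_eq abs_divide)
      qed
      then show "eventually (\<lambda>y. norm ((pp n y - pp n 0) / (y - 0)) \<le> \<bar>y\<bar>) (at (0::real))"
        unfolding eventually_at by (intro exI[of _ 1]) auto
      show "((\<lambda>y::real. \<bar>y\<bar>) \<longlongrightarrow> 0) (at 0)"
        using tendsto_rabs[OF tendsto_ident_at[of "0::real" UNIV]] by simp
    qed
    then show ?thesis using s0 val by (simp only: has_field_derivative_iff)
  qed
qed

lemma pp_deriv[derivative_intros]:
  assumes "2 \<le> n" "(f has_real_derivative f') (at x within S)"
  shows "((\<lambda>x. pp n (f x)) has_real_derivative (real n * pp (n-1) (f x)) * f') (at x within S)"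
  using DERIV_chain'[OF assms(2) pp_deriv0[OF assms(1)]] by simp

lemma pp_cont[continuous_intros]: "continuous_on S f \<Longrightarrow> continuous_on S (\<lambda>x. pp n (f x))"
  unfolding pp_def by (intro continuous_intros)

lemma pp_nonneg[simp]: "0 \<le> pp n s" by (simp add: pp_def)
lemma pp_le1: "s \<le> 1 \<Longrightarrow> pp n s \<le> 1" by (simp add: pp_def power_le_one)
lemma pp_neg[simp]: "s \<le> 0 \<Longrightarrow> 0 < n \<Longrightarrow> pp n s = 0" by (simp add: pp_def)
lemma pp_pos: "0 \<le> s \<Longrightarrow> pp n s = s^n" by (simp add: pp_def)

definition qf :: "real \<Rightarrow> real" where
  "qf s = pp 3 (1-s) / (pp 3 (1-s) + pp 3 s)"
definition qN1 :: "real \<Rightarrow> real" where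
  "qN1 s = (-3 * pp 2 (1-s)) * pp 3 s - pp 3 (1-s) * (3 * pp 2 s)"
definition qN1' :: "real \<Rightarrow> real" where
  "qN1' s = (6 * pp 1 (1-s)) * pp 3 s - pp 3 (1-s) * (6 * pp 1 s)"
definition qD :: "real \<Rightarrow> real" where "qD s = pp 3 (1-s) + pp 3 s"
definition qD' :: "real \<Rightarrow> real" where "qD' s = -3 * pp 2 (1-s) + 3 * pp 2 s"
definition Q1 :: "real \<Rightarrow> real" where "Q1 s = qN1 s / (qD s)^2"
definition Q2 :: "real \<Rightarrow> real" where "Q2 s = (qN1' s * qD s - 2 * qN1 s * qD' s) / (qD s)^3"

lemma qD_ge: "qD s \<ge> 1/4"
proof -
  consider "s \<le> 0" | "s \<ge> 1" | "0 \<le> s" "s \<le> 1" by linarith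
  then show ?thesis
  proof cases
    case 1
    then have "pp 3 (1-s) = (1-s)^3" by (simp add: pp_pos)
    moreover have "(1-s)^3 \<ge> 1" using 1 by (simp add: one_le_power)
    moreover have "pp 3 s \<ge> 0" by simp
    ultimately show ?thesis unfolding qD_def by linarith
  next
    case 2
    then have "pp 3 s = s^3" by (simp add: pp_pos)
    moreover have "s^3 \<ge> 1" using 2 by (simp add: one_le_power)
    moreover have "pp 3 (1-s) \<ge> 0" by simp
    ultimately show ?thesis unfolding qD_def by linarith
  next
    case 3
    then have "qD s = (1-s)^3 + s^3" by (simp add: qD_def pp_pos)
    also have "\<dots> = 1/4 + 3*(s-1/2)^2" by (simp add: power2_eq_square power3_eq_cube algebra_simps)
    finally show ?thesis by (smt (verit) zero_le_power2)
  qed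
qed

lemma qD_pos: "qD s > 0" using qD_ge[of s] by linarith

lemma qf_deriv: "(qf has_real_derivative Q1 s) (at s)"
proof -
  have "((\<lambda>s. pp 3 (1-s) / (pp 3 (1-s) + pp 3 s)) has_real_derivative Q1 s) (at s)"
    apply (rule derivative_eq_intros refl | simp)+
    subgoal using qD_pos[of s] by (simp add: qD_def)
    apply (unfold Q1_def qN1_def qD_def power2_eq_square)
    by (rule arg_cong2[where f="(/)"]) (simp_all add: algebra_simps)
  then show ?thesis unfolding qf_def[abs_def] .
qed

lemma qN1_deriv: "(qN1 has_real_derivative qN1' s) (at s)"
proof -
  have "((\<lambda>s. (-3 * pp 2 (1-s)) * pp 3 s - pp 3 (1-s) * (3 * pp 2 s)) has_real_derivative qN1' s) (at s)"
    apply (rule derivative_eq_intros refl | simp)+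
    by (simp add: qN1'_def algebra_simps)
  then show ?thesis unfolding qN1_def[abs_def] .
qed

lemma qD_deriv: "(qD has_real_derivative qD' s) (at s)"
proof -
  have "((\<lambda>s. pp 3 (1-s) + pp 3 s) has_real_derivative qD' s) (at s)"
    apply (rule derivative_eq_intros refl | simp)+
    by (simp add: qD'_def algebra_simps)
  then show ?thesis unfolding qD_def[abs_def] .
qed

lemma Q1_deriv0: "(Q1 has_real_derivative Q2 s) (at s)"
proof -
  have "((\<lambda>s. qN1 s / (qD s)^2) has_real_derivative Q2 s) (at s)"
    apply (rule derivative_eq_intros qN1_deriv qD_deriv refl | simp)+
    subgoal using qD_pos[of s] by simp
    using qD_pos[of s] by (simp add: Q2_def field_simps power2_eq_square power3_eq_cube)
  then show ?thesis unfolding Q1_def[abs_def] .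
qed

lemma qD_ne: "pp 3 (1-s) + pp 3 s \<noteq> 0" using qD_pos[of s] by (simp add: qD_def)

lemma qf_deriv'[derivative_intros]:
  "(f has_real_derivative f') (at x within S) \<Longrightarrow> ((\<lambda>x. qf (f x)) has_real_derivative Q1 (f x) * f') (at x within S)"
  by (rule DERIV_chain'[OF _ qf_deriv])

lemma Q1_deriv'[derivative_intros]:
  "(f has_real_derivative f') (at x within S) \<Longrightarrow> ((\<lambda>x. Q1 (f x)) has_real_derivative Q2 (f x) * f') (at x within S)"
  by (rule DERIV_chain'[OF _ Q1_deriv0])

lemma Q2_cont[continuous_intros]: "continuous_on S f \<Longrightarrow> continuous_on S (\<lambda>x. Q2 (f x))"
  unfolding Q2_def qN1'_def qD_def qN1_def qD'_def
  by (auto intro!: continuous_intros simp: qD_ne)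

lemma Q1_cont[continuous_intros]: "continuous_on S f \<Longrightarrow> continuous_on S (\<lambda>x. Q1 (f x))"
  unfolding Q1_def qD_def qN1_def
  by (auto intro!: continuous_intros simp: qD_ne)

lemma qf_cont[continuous_intros]: "continuous_on S f \<Longrightarrow> continuous_on S (\<lambda>x. qf (f x))"
  unfolding qf_def
  by (auto intro!: continuous_intros simp: qD_ne)

lemma unit_prod: "0 \<le> (x::real) \<Longrightarrow> x \<le> 1 \<Longrightarrow> 0 \<le> y \<Longrightarrow> y \<le> 1 \<Longrightarrow> 0 \<le> x*y \<and> x*y \<le> 1"
  by (simp add: mult_le_one)

lemma pp_unit: "0 \<le> s \<Longrightarrow> s \<le> 1 \<Longrightarrow> 0 \<le> pp k s \<and> pp k s \<le> 1"
  by (simp add: pp_le1)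

lemma Q_zero: assumes "s \<le> 0 \<or> s \<ge> 1" shows "Q1 s = 0" "Q2 s = 0"
  using assms by (auto simp: Q1_def Q2_def qN1_def qN1'_def)

lemma Q_mid_bounds:
  assumes "0 \<le> s" "s \<le> 1"
  shows "\<bar>qN1 s\<bar> \<le> 6" "\<bar>qN1' s\<bar> \<le> 12" "\<bar>qD' s\<bar> \<le> 6" "qD s \<le> 2"
proof -
  have s': "0 \<le> 1 - s" "1 - s \<le> 1" using assms by auto
  note u = pp_unit[OF assms] pp_unit[OF s']
  have p1: "0 \<le> pp 2 (1-s) * pp 3 s \<and> pp 2 (1-s) * pp 3 s \<le> 1" by (intro unit_prod; use u in auto)
  have p2: "0 \<le> pp 3 (1-s) * pp 2 s \<and> pp 3 (1-s) * pp 2 s \<le> 1" by (intro unit_prod; use u in auto)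
  have p3: "0 \<le> pp 1 (1-s) * pp 3 s \<and> pp 1 (1-s) * pp 3 s \<le> 1" by (intro unit_prod; use u in auto)
  have p4: "0 \<le> pp 3 (1-s) * pp 1 s \<and> pp 3 (1-s) * pp 1 s \<le> 1" by (intro unit_prod; use u in auto)
  have "qN1 s = -3 * (pp 2 (1-s) * pp 3 s) - 3*(pp 3 (1-s) * pp 2 s)" by (simp add: qN1_def algebra_simps)
  then show "\<bar>qN1 s\<bar> \<le> 6" using p1 p2 unfolding abs_le_iff by linarith
  have "qN1' s = 6 * (pp 1 (1-s) * pp 3 s) - 6*(pp 3 (1-s) * pp 1 s)" by (simp add: qN1'_def algebra_simps)
  then show "\<bar>qN1' s\<bar> \<le> 12" using p3 p4 unfolding abs_le_iff by linarith
  show "\<bar>qD' s\<bar> \<le> 6" unfolding qD'_def using u[of 2] pp_nonneg[of 2 s] pp_nonneg[of 2 "1-s"] unfolding abs_le_iff by linarith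
  show "qD s \<le> 2" unfolding qD_def using u[of 3] by simp
qed

lemma Q1_bound: "\<bar>Q1 s\<bar> \<le> 96"
proof (cases "0 \<le> s \<and> s \<le> 1")
  case True
  then have b: "\<bar>qN1 s\<bar> \<le> 6" using Q_mid_bounds by auto
  have "(1/4)^2 \<le> (qD s)^2" by (rule power_mono[OF qD_ge]) simp
  then have d: "(qD s)^2 \<ge> 1/16" by (simp add: power2_eq_square)
  have "\<bar>Q1 s\<bar> = \<bar>qN1 s\<bar> / (qD s)^2" by (simp add: Q1_def abs_divide)
  also have "\<dots> \<le> 6 / (1/16)" using b d by (intro frac_le) auto
  finally show ?thesis by simp
next
  case False then show ?thesis using Q_zero[of s] by auto
qed

lemma Q2_bound: "\<bar>Q2 s\<bar> \<le> 6144"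
proof (cases "0 \<le> s \<and> s \<le> 1")
  case True
  then have b: "\<bar>qN1 s\<bar> \<le> 6" "\<bar>qN1' s\<bar> \<le> 12" "\<bar>qD' s\<bar> \<le> 6" "qD s \<le> 2" using Q_mid_bounds by auto
  have "(1/4)^3 \<le> (qD s)^3" by (rule power_mono[OF qD_ge]) simp
  then have d: "(qD s)^3 \<ge> 1/64" by (simp add: power3_eq_cube)
  have pos: "qD s > 0" by (rule qD_pos)
  have "\<bar>qN1' s * qD s - 2 * qN1 s * qD' s\<bar> \<le> \<bar>qN1' s * qD s\<bar> + \<bar>2 * qN1 s * qD' s\<bar>"
    by (rule abs_triangle_ineq4)
  also have "\<dots> = \<bar>qN1' s\<bar> * qD s + 2 * \<bar>qN1 s\<bar> * \<bar>qD' s\<bar>" using pos by (simp add: abs_mult)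
  also have "\<dots> \<le> 12 * 2 + 2 * 6 * 6"
    using b pos by (intro add_mono mult_mono) auto
  finally have n: "\<bar>qN1' s * qD s - 2 * qN1 s * qD' s\<bar> \<le> 96" by simp
  have "\<bar>Q2 s\<bar> = \<bar>qN1' s * qD s - 2 * qN1 s * qD' s\<bar> / (qD s)^3" using pos by (simp add: Q2_def abs_divide)
  also have "\<dots> \<le> 96 / (1/64)" using n d by (intro frac_le) auto
  finally show ?thesis by simp
next
  case False then show ?thesis using Q_zero[of s] by auto
qed

lemma qf_props:
  shows "0 \<le> qf s" "qf s \<le> 1" "s \<le> 0 \<Longrightarrow> qf s = 1" "s \<ge> 1 \<Longrightarrow> qf s = 0" "s < 1 \<Longrightarrow> qf s > 0"
proof -
  have d: "pp 3 (1-s) + pp 3 s > 0" using qD_pos[of s] by (simp add: qD_def)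
  show "0 \<le> qf s" unfolding qf_def using d by simp
  show "qf s \<le> 1" unfolding qf_def using d by (simp add: divide_le_eq)
  show "s \<le> 0 \<Longrightarrow> qf s = 1" unfolding qf_def using d by simp
  show "s \<ge> 1 \<Longrightarrow> qf s = 0" unfolding qf_def by simp
  show "s < 1 \<Longrightarrow> qf s > 0" unfolding qf_def using d by (simp add: pp_def)
qed

lemma radial_calc:
  fixes H H1 H2 :: "real \<Rightarrow> real" and x0 :: "real^'n"
  assumes dH: "\<And>t. (H has_real_derivative H1 t) (at t)"
    and dH1: "\<And>t. (H1 has_real_derivative H2 t) (at t)"
    and cH2: "continuous_on UNIV H2"
  defines "\<phi> \<equiv> (\<lambda>y. H ((y - x0) \<bullet> (y - x0)))"
  shows "grad \<phi> = (\<lambda>y. (2 * H1 ((y - x0) \<bullet> (y - x0))) *\<^sub>R (y - x0))"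
    and "\<And>i j y. hess_entry \<phi> i j y = 4 * H2 ((y - x0) \<bullet> (y - x0)) * ((y - x0) $ j) * ((y - x0) $ i)
              + 2 * H1 ((y - x0) \<bullet> (y - x0)) * (if i = j then 1 else 0)"
    and "\<And>y. laplacian \<phi> y = 4 * H2 ((y - x0) \<bullet> (y - x0)) * ((y - x0) \<bullet> (y - x0))
              + 2 * real CARD('n) * H1 ((y - x0) \<bullet> (y - x0))"
    and "C2 \<phi>"
proof -
  define t where "t = (\<lambda>y::real^'n. (y - x0) \<bullet> (y - x0))"
  have dt: "(t has_derivative (\<lambda>v. 2 * ((y - x0) \<bullet> v))) (at y)" for y
    unfolding t_def
    by (rule derivative_eq_intros refl)+ (simp add: inner_commute)
  have dHd: "(H has_derivative (\<lambda>h. H1 s * h)) (at s)" for s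
    using dH[of s] by (simp add: has_field_derivative_def)
  have dH1d: "(H1 has_derivative (\<lambda>h. H2 s * h)) (at s)" for s
    using dH1[of s] by (simp add: has_field_derivative_def)
  have dphi: "(\<phi> has_derivative (\<lambda>v. H1 (t y) * (2 * ((y - x0) \<bullet> v)))) (at y)" for y
    using diff_chain_at[OF dt dHd] unfolding \<phi>_def t_def by (simp add: o_def)
  have gradeq: "grad \<phi> y = (2 * H1 (t y)) *\<^sub>R (y - x0)" for y
    unfolding grad_def frechet_derivative_at[OF dphi, symmetric]
    by (simp add: vec_eq_iff inner_axis)
  then show g: "grad \<phi> = (\<lambda>y. (2 * H1 ((y - x0) \<bullet> (y - x0))) *\<^sub>R (y - x0))"
    unfolding t_def by auto
  have dH1t: "((\<lambda>y. H1 (t y)) has_derivative (\<lambda>v. H2 (t y) * (2 * ((y - x0) \<bullet> v)))) (at y)" for y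
    using diff_chain_at[OF dt dH1d] by (simp add: o_def)
  have dgi: "((\<lambda>y. grad \<phi> y $ i) has_derivative
      (\<lambda>v. 2 * (H2 (t y) * (2 * ((y - x0) \<bullet> v))) * ((y - x0) $ i) + 2 * H1 (t y) * (v $ i))) (at y)" for y i
  proof -
    have dc: "((\<lambda>y. (y - x0) $ i) has_derivative (\<lambda>v. v $ i)) (at y)"
      using bounded_linear.has_derivative[OF bounded_linear_vec_nth[of i] has_derivative_diff[OF has_derivative_ident has_derivative_const]]
      by simp
    have "((\<lambda>y. 2 * H1 (t y) * ((y - x0) $ i)) has_derivative
      (\<lambda>v. 2 * (H2 (t y) * (2 * ((y - x0) \<bullet> v))) * ((y - x0) $ i) + 2 * H1 (t y) * (v $ i))) (at y)"
      by (rule derivative_eq_intros dH1t dc refl)+ (simp add: algebra_simps)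
    then show ?thesis unfolding gradeq by simp
  qed
  have hess: "hess_entry \<phi> i j y = 4 * H2 (t y) * ((y - x0) $ j) * ((y - x0) $ i)
              + 2 * H1 (t y) * (if i = j then 1 else 0)" for i j y
    unfolding hess_entry_def frechet_derivative_at[OF dgi, symmetric]
    by (simp add: inner_axis, simp add: axis_def)
  then show "\<And>i j y. hess_entry \<phi> i j y = 4 * H2 ((y - x0) \<bullet> (y - x0)) * ((y - x0) $ j) * ((y - x0) $ i)
              + 2 * H1 ((y - x0) \<bullet> (y - x0)) * (if i = j then 1 else 0)"
    unfolding t_def by simp
  have "laplacian \<phi> y = 4 * H2 (t y) * (\<Sum>i\<in>UNIV. (y - x0) $ i * (y - x0) $ i) + 2 * real CARD('n) * H1 (t y)" for y
  proof -
    have "laplacian \<phi> y = (\<Sum>i\<in>UNIV. (4 * H2 (t y)) * ((y - x0) $ i * (y - x0) $ i) + 2 * H1 (t y))"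
      unfolding laplacian_def hess by (intro sum.cong) (simp_all add: algebra_simps)
    also have "\<dots> = (4 * H2 (t y)) * (\<Sum>i\<in>UNIV. (y - x0) $ i * (y - x0) $ i) + (\<Sum>i\<in>(UNIV::'n set). 2 * H1 (t y))"
      by (simp add: sum.distrib sum_distrib_left)
    finally show ?thesis by (simp add: algebra_simps)
  qed
  then show "\<And>y. laplacian \<phi> y = 4 * H2 ((y - x0) \<bullet> (y - x0)) * ((y - x0) \<bullet> (y - x0))
              + 2 * real CARD('n) * H1 ((y - x0) \<bullet> (y - x0))"
    unfolding t_def by (simp add: inner_vec_def)
  have cH1: "continuous_on UNIV H1"
    using dH1 by (meson DERIV_isCont continuous_at_imp_continuous_on)
  have ct: "continuous_on UNIV t" unfolding t_def by (intro continuous_intros)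
  show "C2 \<phi>"
    unfolding C2_def
  proof (intro conjI allI)
    show "\<phi> differentiable at x" for x using dphi by (auto simp: differentiable_def)
    show "grad \<phi> differentiable at x" for x
    proof -
      have "((\<lambda>y. (2 * H1 (t y)) *\<^sub>R (y - x0)) has_derivative
        (\<lambda>v. (2 * (H2 (t x) * (2 * ((x - x0) \<bullet> v)))) *\<^sub>R (x - x0) + (2 * H1 (t x)) *\<^sub>R v)) (at x)"
        by (rule derivative_eq_intros dH1t refl)+ (simp add: algebra_simps)
      then show ?thesis unfolding gradeq[abs_def] by (auto simp: differentiable_def)
    qed
    show "continuous_on UNIV (hess_entry \<phi> i j)" for i j
      unfolding hess[abs_def]
      by (intro continuous_intros continuous_on_compose2[OF cH2 ct] continuous_on_compose2[OF cH1 ct]) auto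
  qed
qed

definition sig :: "real \<Rightarrow> real \<Rightarrow> real \<Rightarrow> real" where "sig A B t = (t - A) / (B - A)"
definition Hf :: "nat \<Rightarrow> real \<Rightarrow> real \<Rightarrow> real \<Rightarrow> real" where
  "Hf k A B t = qf (sig A B t) ^ k"
definition Hf1 :: "nat \<Rightarrow> real \<Rightarrow> real \<Rightarrow> real \<Rightarrow> real" where
  "Hf1 k A B t = real k * qf (sig A B t) ^ (k-1) * Q1 (sig A B t) / (B - A)"
definition Hf2 :: "nat \<Rightarrow> real \<Rightarrow> real \<Rightarrow> real \<Rightarrow> real" where
  "Hf2 k A B t = real k * (real (k-1) * qf (sig A B t) ^ (k-2) * Q1 (sig A B t) * Q1 (sig A B t)
       + qf (sig A B t) ^ (k-1) * Q2 (sig A B t)) / (B - A)^2"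

lemma sig_deriv: "A < B \<Longrightarrow> ((\<lambda>t. (t - A) / (B - A)) has_real_derivative 1 / (B - A)) (at t)"
  by (rule DERIV_cdivide[where D=1, simplified]) (auto intro!: derivative_eq_intros)

lemma Hf_deriv: assumes "A < B" "2 \<le> k"
  shows "(Hf k A B has_real_derivative Hf1 k A B t) (at t)"
proof -
  have d1: "((\<lambda>t. qf ((t - A) / (B - A))) has_real_derivative Q1 ((t - A) / (B - A)) * (1 / (B - A))) (at t)"
    by (rule qf_deriv'[OF sig_deriv[OF assms(1)]])
  have "((\<lambda>t. qf ((t - A) / (B - A)) ^ k) has_real_derivative Hf1 k A B t) (at t)"
    by (rule DERIV_cong[OF DERIV_power[OF d1]]) (simp add: Hf1_def sig_def)
  then show ?thesis unfolding Hf_def[abs_def] sig_def .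
qed

lemma Hf_alg: "(d::real) \<noteq> 0 \<Longrightarrow> (real k * (of_nat (k-1) * ((a * (1/d)) * q^(k-1-Suc 0))) * a + (b*(1/d)) * (real k * q^(k-1))) / d
   = real k * (real (k-1) * q^(k-2) * a * a + q^(k-1) * b) / d^2"
proof -
  assume d: "d \<noteq> 0"
  have k: "k - 1 - Suc 0 = k - 2" by simp
  show ?thesis unfolding k using d by (simp add: field_simps power2_eq_square)
qed

lemma Hf1_deriv: assumes "A < B" "2 \<le> k"
  shows "(Hf1 k A B has_real_derivative Hf2 k A B t) (at t)"
proof -
  have k: "k - 1 - Suc 0 = k - 2" by simp
  have d1: "((\<lambda>t. qf ((t - A) / (B - A))) has_real_derivative Q1 ((t - A) / (B - A)) * (1 / (B - A))) (at t)"
    by (rule qf_deriv'[OF sig_deriv[OF assms(1)]])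
  have d2: "((\<lambda>t. Q1 ((t - A) / (B - A))) has_real_derivative Q2 ((t - A) / (B - A)) * (1 / (B - A))) (at t)"
    by (rule Q1_deriv'[OF sig_deriv[OF assms(1)]])
  have "((\<lambda>t. real k * qf ((t - A) / (B - A)) ^ (k-1) * Q1 ((t - A) / (B - A)) / (B - A))
     has_real_derivative Hf2 k A B t) (at t)"
    apply (rule DERIV_cong[OF DERIV_cdivide[OF DERIV_mult[OF DERIV_cmult[OF DERIV_power[OF d1]] d2]]])
    unfolding Hf2_def sig_def by (rule Hf_alg) (use assms in simp)
  then show ?thesis unfolding Hf1_def[abs_def] sig_def by (simp add: mult.assoc)
qed

lemma Hf2_cont: assumes "A < B" shows "continuous_on UNIV (Hf2 k A B)"
  unfolding Hf2_def[abs_def] sig_def using assms by (intro continuous_intros) auto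

lemma Hf_zero: assumes "A < B" "sig A B t \<le> 0 \<or> sig A B t \<ge> 1"
  shows "Hf1 k A B t = 0" "Hf2 k A B t = 0"
  using Q_zero[OF assms(2)] by (simp_all add: Hf1_def Hf2_def)

lemma Hf_bounds: assumes "A < B" "3 \<le> k"
  shows "\<bar>Hf1 k A B t\<bar> \<le> real k * 96 * qf (sig A B t) ^ (k-2) / (B - A)"
    and "\<bar>Hf2 k A B t\<bar> \<le> real k * (real (k-1) * 96 * 96 + 6144) * qf (sig A B t) ^ (k-2) / (B - A)^2"
proof -
  define q where "q = qf (sig A B t)"
  have q: "0 \<le> q" "q \<le> 1" unfolding q_def using qf_props by auto
  have qq: "q ^ (k-1) \<le> q ^ (k-2)" using q assms by (intro power_decreasing) auto
  have qn: "0 \<le> q ^ (k-2)" "0 \<le> q^(k-1)" using q by auto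
  have BA: "B - A > 0" using assms by simp
  have b1: "\<bar>Q1 (sig A B t)\<bar> \<le> 96" "\<bar>Q2 (sig A B t)\<bar> \<le> 6144" by (rule Q1_bound, rule Q2_bound)
  have "\<bar>Hf1 k A B t\<bar> = real k * q ^ (k-1) * \<bar>Q1 (sig A B t)\<bar> / (B - A)"
    unfolding Hf1_def q_def[symmetric] using BA q by (simp add: abs_mult abs_divide)
  also have "\<dots> \<le> real k * q ^ (k-2) * 96 / (B - A)"
    using BA qq qn b1 by (intro divide_right_mono mult_mono) auto
  finally show "\<bar>Hf1 k A B t\<bar> \<le> real k * 96 * qf (sig A B t) ^ (k-2) / (B - A)"
    unfolding q_def by (simp add: algebra_simps)
  have "\<bar>real (k-1) * q ^ (k-2) * Q1 (sig A B t) * Q1 (sig A B t) + q ^ (k-1) * Q2 (sig A B t)\<bar>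
      \<le> real (k-1) * q ^ (k-2) * \<bar>Q1 (sig A B t)\<bar> * \<bar>Q1 (sig A B t)\<bar> + q ^ (k-1) * \<bar>Q2 (sig A B t)\<bar>"
    using qn by (simp add: abs_mult abs_triangle_ineq[THEN order_trans])
  also have "\<dots> \<le> real (k-1) * q ^ (k-2) * 96 * 96 + q ^ (k-2) * 6144"
    using qn qq b1 by (intro add_mono mult_mono) auto
  finally have n: "\<bar>real (k-1) * q ^ (k-2) * Q1 (sig A B t) * Q1 (sig A B t) + q ^ (k-1) * Q2 (sig A B t)\<bar>
      \<le> (real (k-1) * 96 * 96 + 6144) * q ^ (k-2)" by (simp add: algebra_simps)
  have "\<bar>Hf2 k A B t\<bar> = real k * \<bar>real (k-1) * q ^ (k-2) * Q1 (sig A B t) * Q1 (sig A B t) + q ^ (k-1) * Q2 (sig A B t)\<bar> / (B - A)^2"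
    unfolding Hf2_def q_def[symmetric] using BA by (simp add: abs_mult abs_divide)
  also have "\<dots> \<le> real k * ((real (k-1) * 96 * 96 + 6144) * q ^ (k-2)) / (B - A)^2"
    using n BA by (intro divide_right_mono mult_left_mono) auto
  finally show "\<bar>Hf2 k A B t\<bar> \<le> real k * (real (k-1) * 96 * 96 + 6144) * qf (sig A B t) ^ (k-2) / (B - A)^2"
    unfolding q_def by (simp add: algebra_simps)
qed

lemma bm_leb: "f \<in> borel_measurable borel \<Longrightarrow> (f::'a::euclidean_space\<Rightarrow>real) \<in> borel_measurable (lebesgue_on S)"
  by (simp add: measurable_completion measurable_restrict_space1)

lemma content_ball_cart: "0 \<le> r \<Longrightarrow> measure lborel (ball (c::real^'n) r) = unit_ball_vol (real CARD('n)) * r ^ CARD('n)"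
  using content_ball[where c=c and r=r] by simp

lemma measure_leb_ball: "measure lebesgue (ball (c::real^'n) r) = measure lborel (ball c r)"
  using measure_completion[of "ball c r" lborel] by simp

lemma int_const_ball: "0 \<le> r \<Longrightarrow> integral (ball (c::real^'n) r) (\<lambda>y. k) = k * (unit_ball_vol (real CARD('n)) * r ^ CARD('n))"
proof -
  assume r: "0 \<le> r"
  have "integral (ball c r) (\<lambda>y. k) = k * integral (ball c r) (\<lambda>y. 1::real)"
    by (simp add: integral_mult_right[symmetric])
  also have "integral (ball c r) (\<lambda>y. 1::real) = measure lebesgue (ball c r)"
    by (simp add: lmeasure_integral[symmetric])
  finally show ?thesis using r by (simp add: measure_leb_ball content_ball_cart)
qed

lemma bnd_int:
  fixes g :: "real^'n \<Rightarrow> real"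
  assumes "g \<in> borel_measurable borel" "\<And>y. y \<in> ball c r \<Longrightarrow> \<bar>g y\<bar> \<le> M"
  shows "g integrable_on ball c r"
  by (rule measurable_bounded_by_integrable_imp_integrable_real[OF bm_leb[OF assms(1)] integrable_on_const])
     (use assms(2) in auto)

lemma bnd_int_le:
  fixes g :: "real^'n \<Rightarrow> real"
  assumes "g \<in> borel_measurable borel" "\<And>y. y \<in> ball c r \<Longrightarrow> \<bar>g y\<bar> \<le> M" "0 \<le> r"
  shows "integral (ball c r) g \<le> M * (unit_ball_vol (real CARD('n)) * r ^ CARD('n))"
proof -
  have "integral (ball c r) g \<le> integral (ball c r) (\<lambda>y. M)"
    by (rule integral_le[OF bnd_int[OF assms(1,2)] integrable_on_const]) (use abs_le_D1 assms(2) in auto)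
  then show ?thesis using int_const_ball[OF assms(3), of c M] by simp
qed

lemma term_eq:
  fixes r e :: real and N j :: nat
  assumes r: "r > 0"
  shows "(r / 2^(j+1)) powr e * (r / 2^j) ^ N = 2 powr (-e) * r powr (N + e) * (2 powr (-(N + e))) ^ j"
proof -
  have a: "(r / 2^(j+1)) powr e = exp (e * (ln r - (j+1) * ln 2))"
    using r by (simp add: powr_def ln_div ln_realpow ln_mult algebra_simps)
  have "(r / 2^j) ^ N = exp (ln ((r / 2^j) ^ N))" using r by simp
  also have "\<dots> = exp (N * (ln r - j * ln 2))" using r by (simp add: ln_realpow ln_div)
  finally have b: "(r / 2^j) ^ N = exp (N * (ln r - j * ln 2))" .
  have c: "(2 powr (-(N + e))) ^ j = exp (j * (-(N+e) * ln 2))"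
    by (simp add: powr_def exp_of_nat_mult[symmetric])
  have d: "2 powr (-e) * r powr (N + e) = exp (-e * ln 2 + (N+e) * ln r)"
    using r by (simp add: powr_def mult_exp_exp algebra_simps)
  show ?thesis unfolding a b c d exp_add[symmetric] by (simp add: algebra_simps)
qed

definition Cs :: "nat \<Rightarrow> real \<Rightarrow> real" where
  "Cs N e = unit_ball_vol (real N) * 2 powr (-e) / (1 - 2 powr (-(real N + e)))"

lemma sing_int:
  fixes e r :: real
  assumes e1: "- real CARD('n) < e" and e2: "e < 0" and r: "r > 0"
  shows "(\<lambda>y::real^'n. norm y powr e) integrable_on ball 0 r \<and>
         integral (ball (0::real^'n) r) (\<lambda>y. norm y powr e) \<le> Cs CARD('n) e * r powr (real CARD('n) + e)"
proof -
  define N where "N = CARD('n)"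
  define V where "V = unit_ball_vol (real N)"
  define S where "S = ball (0::real^'n) r"
  define \<rho> where "\<rho> = (2::real) powr (-(real N + e))"
  define fk where "fk = (\<lambda>k (y::real^'n). if r / 2^k \<le> norm y then norm y powr e else 0)"
  define T where "T = (\<lambda>j::nat. (r / 2^(j+1)) powr e * (V * (r / 2^j) ^ N))"
  have \<rho>: "0 < \<rho>" "\<rho> < 1" unfolding \<rho>_def using e1 by (auto intro!: powr_less_one simp: N_def)
  have V: "V \<ge> 0" unfolding V_def by simp
  have meas: "fk k \<in> borel_measurable borel" for k unfolding fk_def by measurable
  have fk_nn: "0 \<le> fk k y" for k y unfolding fk_def by simp
  have fk_bd: "\<bar>fk k y\<bar> \<le> (r / 2^k) powr e" for k y
  proof (cases "r / 2^k \<le> norm y")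
    case True
    then have "norm y powr e \<le> (r / 2^k) powr e"
      using r e2 by (intro powr_mono2') auto
    then show ?thesis using True unfolding fk_def by simp
  next
    case False then show ?thesis unfolding fk_def by simp
  qed
  have fk_int: "fk k integrable_on S" for k
    unfolding S_def by (rule bnd_int[OF meas fk_bd])
  have mono: "fk k y \<le> fk (Suc k) y" for k y
  proof -
    have "r / 2^(Suc k) \<le> r / 2^k" using r by (simp add: divide_left_mono)
    then show ?thesis unfolding fk_def using fk_nn[of "Suc k" y] by (auto simp: fk_def)
  qed
  have conv: "((\<lambda>k. fk k y) \<longlongrightarrow> norm y powr e) sequentially" for y
  proof (cases "y = 0")
    case True
    then have "fk k y = 0" for k using r unfolding fk_def by auto
    then show ?thesis using True by simp
  next
    case False
    have "(\<lambda>k. r / 2^k) \<longlonglongrightarrow> 0" by (rule LIMSEQ_divide_realpow_zero) simp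
    then have "eventually (\<lambda>k. r / 2^k < norm y) sequentially"
      using False by (intro order_tendstoD(2)) auto
    then have "eventually (\<lambda>k. fk k y = norm y powr e) sequentially"
      by eventually_elim (auto simp: fk_def)
    then show ?thesis by (rule tendsto_eventually)
  qed
  have step: "integral S (fk (Suc k)) \<le> integral S (fk k) + T k" for k
  proof -
    define ek where "ek = (\<lambda>y::real^'n. if r / 2^(Suc k) \<le> norm y \<and> norm y < r / 2^k then norm y powr e else 0)"
    define c where "c = (r / 2^(k+1)) powr e"
    have c: "0 \<le> c" unfolding c_def by simp
    have ek_meas: "ek \<in> borel_measurable borel" unfolding ek_def by measurable
    have ek_bd: "\<bar>ek y\<bar> \<le> c" for y
    proof (cases "r / 2^(Suc k) \<le> norm y")
      case True
      then have "norm y powr e \<le> (r / 2^(Suc k)) powr e"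
        using r e2 by (intro powr_mono2') auto
      then show ?thesis using True unfolding ek_def c_def by simp
    next
      case False then show ?thesis unfolding ek_def c_def by simp
    qed
    have ek_int: "ek integrable_on S" unfolding S_def by (rule bnd_int[OF ek_meas ek_bd])
    have split: "fk (Suc k) y = fk k y + ek y" for y
    proof -
      have "r / 2^(Suc k) \<le> r / 2^k" using r by (simp add: divide_left_mono)
      then show ?thesis unfolding fk_def ek_def by auto
    qed
    have "integral S (fk (Suc k)) = integral S (\<lambda>y. fk k y + ek y)"
      using split by (intro arg_cong[where f="integral S"]) auto
    also have "\<dots> = integral S (fk k) + integral S ek"
      by (rule integral_add[OF fk_int ek_int])
    finally have eq: "integral S (fk (Suc k)) = integral S (fk k) + integral S ek" .
    define B where "B = ball (0::real^'n) (r / 2^k)"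
    have rk: "r / 2^k \<le> r" using r by (simp add: divide_le_eq one_le_power)
    have BS: "B \<inter> S = B" unfolding B_def S_def using rk by auto
    have gint: "(\<lambda>y. if y \<in> B then c else 0) integrable_on S"
      by (subst integrable_restrict_Int) (simp only: BS, simp add: B_def integrable_on_const)
    have "integral S ek \<le> integral S (\<lambda>y. if y \<in> B then c else 0)"
    proof (rule integral_le[OF ek_int gint])
      fix y assume "y \<in> S"
      show "ek y \<le> (if y \<in> B then c else 0)"
        using ek_bd[of y] c by (auto simp: ek_def B_def)
    qed
    also have "integral S (\<lambda>y. if y \<in> B then c else 0) = integral B (\<lambda>y. c)"
      by (simp add: integral_restrict_Int BS)
    also have "\<dots> = c * (V * (r / 2^k) ^ N)"
      unfolding B_def V_def N_def using r by (simp add: int_const_ball)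
    finally show ?thesis using eq unfolding T_def c_def by simp
  qed
  have sum_bd: "integral S (fk k) \<le> (\<Sum>j<k. T j)" for k
  proof (induction k)
    case 0
    have "integral S (fk 0) = integral S (\<lambda>y. 0::real)"
      by (rule integral_cong) (auto simp: fk_def S_def)
    then show ?case by simp
  next
    case (Suc k)
    then show ?case using step[of k] by simp
  qed
  define Bd where "Bd = V * 2 powr (-e) * r powr (real N + e) / (1 - \<rho>)"
  have Tj: "T j = V * 2 powr (-e) * r powr (real N + e) * \<rho> ^ j" for j
    unfolding T_def \<rho>_def using term_eq[OF r, of j e N] by (simp add: algebra_simps)
  have sum_le: "(\<Sum>j<k. T j) \<le> Bd" for k
  proof -
    have "(\<Sum>j<k. T j) = V * 2 powr (-e) * r powr (real N + e) * (\<Sum>j<k. \<rho> ^ j)"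
      unfolding Tj by (simp add: sum_distrib_left)
    also have "(\<Sum>j<k. \<rho> ^ j) = (1 - \<rho> ^ k) / (1 - \<rho>)"
      using \<rho> by (simp add: sum_gp_strict)
    also have "\<dots> \<le> 1 / (1 - \<rho>)"
      using \<rho> by (intro divide_right_mono) auto
    finally show ?thesis unfolding Bd_def using V
      by (simp add: mult_left_mono)
  qed
  have int_le: "integral S (fk k) \<le> Bd" for k using sum_bd[of k] sum_le[of k] by linarith
  have int_nn: "0 \<le> integral S (fk k)" for k
    by (rule integral_nonneg[OF fk_int]) (simp add: fk_nn)
  have bnd: "bounded (range (\<lambda>k. integral S (fk k)))"
    unfolding bounded_real using int_le int_nn by (intro exI[of _ Bd]) auto
  have mc: "(\<lambda>y. norm y powr e) integrable_on S \<and>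
      ((\<lambda>k. integral S (fk k)) \<longlongrightarrow> integral S (\<lambda>y. norm y powr e)) sequentially"
    by (rule monotone_convergence_increasing[OF fk_int mono conv bnd])
  have "integral S (\<lambda>y. norm y powr e) \<le> Bd"
    using mc int_le by (intro tendsto_upperbound[of "\<lambda>k. integral S (fk k)"]) auto
  moreover have "Bd = Cs CARD('n) e * r powr (real CARD('n) + e)"
    unfolding Bd_def Cs_def V_def N_def \<rho>_def by simp
  ultimately show ?thesis using mc unfolding S_def by simp
qed

definition K3 :: "nat \<Rightarrow> real \<Rightarrow> real" where
  "K3 N e = unit_ball_vol (real N) * 16 powr \<bar>e\<bar> + unit_ball_vol (real N) * 2 powr \<bar>e\<bar>
            + Cs N e * 5 powr (real N + e) * 6 powr \<bar>e\<bar>"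

lemma Cs_nonneg: "- real N < e \<Longrightarrow> 0 \<le> Cs N e"
proof -
  assume e: "- real N < e"
  have "2 powr (-(real N + e)) < 1" using e by (intro powr_less_one) auto
  then show ?thesis unfolding Cs_def by (intro divide_nonneg_pos mult_nonneg_nonneg) auto
qed

lemma f_meas: "(\<lambda>y::real^'n. norm y powr e) \<in> borel_measurable borel" by measurable

lemma I_int:
  fixes x0 :: "real^'n"
  assumes e1: "- real CARD('n) < e" and R: "R > 0"
  shows "(\<lambda>y. norm y powr e) integrable_on ball x0 R"
proof (cases "e \<ge> 0")
  case True
  show ?thesis
  proof (rule bnd_int[OF f_meas])
    fix y assume "y \<in> ball x0 R"
    then have "norm y \<le> norm x0 + R" using norm_triangle_ineq[of x0 "y - x0"]
      by (auto simp: dist_norm norm_minus_commute)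
    then show "\<bar>norm y powr e\<bar> \<le> (norm x0 + R) powr e" using True by (simp add: powr_mono2)
  qed
next
  case False
  define S' where "S' = ball (0::real^'n) (norm x0 + R)"
  have "ball x0 R \<subseteq> S'" unfolding S'_def
  proof
    fix y assume "y \<in> ball x0 R"
    then have "dist x0 y < R" by simp
    then show "y \<in> ball 0 (norm x0 + R)" using norm_triangle_ineq[of x0 "y - x0"] by (simp add: dist_norm norm_minus_commute)
  qed
  then have sub: "ball x0 R \<inter> S' = ball x0 R" by auto
  have fint: "(\<lambda>y. norm y powr e) integrable_on S'"
  proof -
    have pos: "0 < norm x0 + R" using R norm_ge_zero[of x0] by linarith
    show ?thesis unfolding S'_def using pos False e1 by (intro conjunct1[OF sing_int]) auto
  qed
  have "(\<lambda>y. if y \<in> ball x0 R then norm y powr e else 0) integrable_on S'"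
  proof (rule measurable_bounded_by_integrable_imp_integrable_real[OF bm_leb fint])
    show "(\<lambda>y. if y \<in> ball x0 R then norm y powr e else 0) \<in> borel_measurable borel"
      by (rule measurable_If_set) (auto intro: f_meas)
  qed (auto simp: S'_def)
  then show ?thesis by (simp only: integrable_restrict_Int sub)
qed

lemma I_pos:
  fixes x0 :: "real^'n"
  assumes e1: "- real CARD('n) < e" and R: "R > 0"
  shows "integral (ball x0 R) (\<lambda>y. norm y powr e) > 0"
proof -
  define v :: "real^'n" where "v = (3*R/4) *\<^sub>R axis undefined 1"
  have nv: "norm v = 3*R/4" unfolding v_def using R by simp
  have "norm ((x0 + v) + (v - x0)) \<le> norm (x0 + v) + norm (v - x0)" by (rule norm_triangle_ineq)
  moreover have "(x0 + v) + (v - x0) = (2::real) *\<^sub>R v" by (simp add: scaleR_2)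
  ultimately have "2 * norm v \<le> norm (x0 + v) + norm (x0 - v)" by (simp add: norm_minus_commute)
  then have "norm (x0 + v) \<ge> 3*R/4 \<or> norm (x0 - v) \<ge> 3*R/4" using nv by linarith
  then obtain z where z: "z = x0 + v \<or> z = x0 - v" "norm z \<ge> 3*R/4" by blast
  have dz: "dist x0 z = 3*R/4" using z(1) nv by (auto simp: dist_norm)
  define \<delta> where "\<delta> = R / 8"
  define m where "m = min ((R/2) powr e) ((norm x0 + 2*R) powr e)"
  have pos: "0 < norm x0 + 2*R" using R norm_ge_zero[of x0] by linarith
  have m: "m > 0" unfolding m_def using R pos by simp
  have Bsub: "ball z \<delta> \<subseteq> ball x0 R"
  proof
    fix y assume "y \<in> ball z \<delta>"
    then have "dist z y < R/8" by (simp add: \<delta>_def)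
    then show "y \<in> ball x0 R" using dz dist_triangle[of x0 y z] R by simp
  qed
  have low: "m \<le> norm y powr e" if "y \<in> ball z \<delta>" for y
  proof -
    have "dist z y < R/8" using that by (simp add: \<delta>_def)
    then have "norm (z - y) < R/8" by (simp add: dist_norm)
    then have y1: "norm y \<ge> R/2" using z(2) norm_triangle_ineq2[of z y] R by linarith
    have "dist x0 y < R" using Bsub that by auto
    then have y2: "norm y \<le> norm x0 + 2*R" using norm_triangle_ineq[of x0 "y - x0"] R by (simp add: dist_norm norm_minus_commute)
    show ?thesis
    proof (cases "e \<ge> 0")
      case True
      then have "(R/2) powr e \<le> norm y powr e" using y1 R by (intro powr_mono2) auto
      then show ?thesis unfolding m_def by linarith
    next
      case False
      then have "(norm x0 + 2*R) powr e \<le> norm y powr e" using y1 y2 R by (intro powr_mono2') auto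
      then show ?thesis unfolding m_def by linarith
    qed
  qed
  have gint: "(\<lambda>y. if y \<in> ball z \<delta> then m else 0) integrable_on ball x0 R"
    by (subst integrable_restrict_Int) (simp add: Int_absorb2[OF Bsub] integrable_on_const)
  have "integral (ball x0 R) (\<lambda>y. if y \<in> ball z \<delta> then m else 0) \<le> integral (ball x0 R) (\<lambda>y. norm y powr e)"
    by (rule integral_le[OF gint I_int[OF e1 R]]) (use low in auto)
  moreover have "integral (ball x0 R) (\<lambda>y. if y \<in> ball z \<delta> then m else 0) = m * (unit_ball_vol (real CARD('n)) * \<delta> ^ CARD('n))"
  proof -
    have "integral (ball x0 R) (\<lambda>y. if y \<in> ball z \<delta> then m else 0) = integral (ball z \<delta>) (\<lambda>y. m)"
      by (simp only: integral_restrict_Int Int_absorb2[OF Bsub])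
    also have "\<dots> = m * (unit_ball_vol (real CARD('n)) * \<delta> ^ CARD('n))"
      using R by (intro int_const_ball) (simp add: \<delta>_def)
    finally show ?thesis .
  qed
  moreover have "m * (unit_ball_vol (real CARD('n)) * \<delta> ^ CARD('n)) > 0"
    using m R unfolding \<delta>_def by simp
  ultimately show ?thesis by linarith
qed

lemma I_upper:
  fixes x0 x :: "real^'n"
  assumes e1: "- real CARD('n) < e" and R: "R > 0"
    and x1: "R/5 \<le> norm x" and x2: "norm (x - x0) \<le> 2*R"
  shows "integral (ball x0 R) (\<lambda>y. norm y powr e) \<le> K3 CARD('n) e * R ^ CARD('n) * norm x powr e"
proof -
  define V where "V = unit_ball_vol (real CARD('n))"
  define N where "N = CARD('n)"
  have V: "V \<ge> 0" unfolding V_def by simp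
  have Cs: "Cs N e \<ge> 0" using Cs_nonneg e1 unfolding N_def by simp
  have xpos: "norm x > 0" using x1 R by linarith
  have t1: "0 \<le> V * 16 powr \<bar>e\<bar> * (R ^ N * norm x powr e)" using V R by (intro mult_nonneg_nonneg) auto
  have t2: "0 \<le> V * 2 powr \<bar>e\<bar> * (R ^ N * norm x powr e)" using V R by (intro mult_nonneg_nonneg) auto
  have t3: "0 \<le> Cs N e * 5 powr (real N + e) * 6 powr \<bar>e\<bar> * (R ^ N * norm x powr e)" using Cs R by (intro mult_nonneg_nonneg) auto
  have K3eq: "K3 CARD('n) e * R ^ CARD('n) * norm x powr e =
      V * 16 powr \<bar>e\<bar> * (R ^ N * norm x powr e) + V * 2 powr \<bar>e\<bar> * (R ^ N * norm x powr e)
      + Cs N e * 5 powr (real N + e) * 6 powr \<bar>e\<bar> * (R ^ N * norm x powr e)"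
    unfolding K3_def V_def N_def by (simp add: algebra_simps)
  have ny: "norm y \<le> norm x + 3 * R" "norm y \<ge> norm x0 - R" if "y \<in> ball x0 R" for y
  proof -
    have d: "norm (y - x0) < R" using that by (simp add: dist_norm norm_minus_commute)
    have t1: "norm y \<le> norm x + norm (y - x)" using norm_triangle_ineq[of x "y - x"] by simp
    have t2: "norm (y - x) \<le> norm (y - x0) + norm (x0 - x)" using norm_triangle_ineq[of "y - x0" "x0 - x"] by simp
    have t3: "norm (x0 - x) \<le> 2 * R" using x2 by (simp add: norm_minus_commute)
    have t4: "norm x0 \<le> norm y + norm (x0 - y)" using norm_triangle_ineq[of y "x0 - y"] by simp
    have t5: "norm (x0 - y) < R" using d by (simp add: norm_minus_commute)
    show "norm y \<le> norm x + 3 * R" using t1 t2 t3 d by linarith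
    show "norm y \<ge> norm x0 - R" using t4 t5 by linarith
  qed
  consider "e \<ge> 0" | "e < 0" "norm x0 \<ge> 4 * R" | "e < 0" "norm x0 < 4 * R" by linarith
  then show ?thesis
  proof cases
    case 1
    have "integral (ball x0 R) (\<lambda>y. norm y powr e) \<le> (16 * norm x) powr e * (V * R ^ N)"
      unfolding V_def N_def
    proof (rule bnd_int_le[OF f_meas _ less_imp_le[OF R]])
      fix y assume y: "y \<in> ball x0 R"
      have "norm y \<le> 16 * norm x" using ny(1)[OF y] x1 by linarith
      then show "\<bar>norm y powr e\<bar> \<le> (16 * norm x) powr e" using 1 by (simp add: powr_mono2)
    qed
    also have "\<dots> = V * 16 powr \<bar>e\<bar> * (R ^ N * norm x powr e)"
    proof -
      have a: "(16 * norm x) powr e = 16 powr e * norm x powr e" using powr_mult[of 16 "norm x" e] by simp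
      have b: "\<bar>e\<bar> = e" using 1 by simp
      show ?thesis unfolding a b by (simp only: mult_ac)
    qed
    finally show ?thesis unfolding K3eq using t2 t3 by linarith
  next
    case 2
    have "integral (ball x0 R) (\<lambda>y. norm y powr e) \<le> (norm x / 2) powr e * (V * R ^ N)"
      unfolding V_def N_def
    proof (rule bnd_int_le[OF f_meas _ less_imp_le[OF R]])
      fix y assume y: "y \<in> ball x0 R"
      have "norm x \<le> norm x0 + 2 * R" using x2 norm_triangle_ineq[of x0 "x - x0"] by simp
      then have "norm x / 2 \<le> norm y" using ny(2)[OF y] 2 by linarith
      then show "\<bar>norm y powr e\<bar> \<le> (norm x / 2) powr e" using 2 xpos by (simp add: powr_mono2')
    qed
    also have "\<dots> = V * 2 powr \<bar>e\<bar> * (R ^ N * norm x powr e)"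
    proof -
      have a: "(norm x / 2) powr e = norm x powr e / 2 powr e" by (rule powr_divide)
      have b: "2 powr \<bar>e\<bar> = inverse (2 powr e)" using 2 by (simp add: powr_minus)
      show ?thesis unfolding a b by (simp add: divide_inverse mult_ac)
    qed
    finally show ?thesis unfolding K3eq using t1 t3 by linarith
  next
    case 3
    define S' where "S' = ball (0::real^'n) (5 * R)"
    have sub: "ball x0 R \<subseteq> S'" unfolding S'_def
    proof
      fix y assume "y \<in> ball x0 R"
      then have "dist x0 y < R" by simp
      then show "y \<in> ball 0 (5 * R)" using 3 norm_triangle_ineq[of x0 "y - x0"] by (simp add: dist_norm norm_minus_commute)
    qed
    have si: "(\<lambda>y. norm y powr e) integrable_on S' \<and>
        integral S' (\<lambda>y::real^'n. norm y powr e) \<le> Cs CARD('n) e * (5 * R) powr (real CARD('n) + e)"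
      unfolding S'_def using sing_int[OF e1 3(1)] R by simp
    have "integral (ball x0 R) (\<lambda>y. norm y powr e) \<le> integral S' (\<lambda>y. norm y powr e)"
      by (rule integral_subset_le[OF sub I_int[OF e1 R]]) (use si in auto)
    also have "\<dots> \<le> Cs N e * (5 * R) powr (real N + e)" using si unfolding N_def by simp
    also have "(5 * R) powr (real N + e) = 5 powr (real N + e) * (R ^ N * R powr e)"
    proof -
      have a: "(5 * R) powr (real N + e) = 5 powr (real N + e) * R powr (real N + e)"
        by (rule powr_mult)
      have b: "R powr (real N + e) = R powr (real N) * R powr e" by (rule powr_add)
      have c: "R powr (real N) = R ^ N" using R by (rule powr_realpow)
      show ?thesis unfolding a b c ..
    qed
    also have "R powr e \<le> 6 powr \<bar>e\<bar> * norm x powr e"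
    proof -
      have "norm x \<le> norm x0 + 2 * R" using x2 norm_triangle_ineq[of x0 "x - x0"] by simp
      then have "norm x \<le> 6 * R" using 3 by linarith
      then have "(6 * R) powr e \<le> norm x powr e" using 3 xpos by (intro powr_mono2') auto
      moreover have "(6 * R) powr e = 6 powr e * R powr e" using R by (simp add: powr_mult)
      moreover have "6 powr \<bar>e\<bar> * 6 powr e = 1" using 3 by (simp add: powr_add[symmetric])
      ultimately have "R powr e = 6 powr \<bar>e\<bar> * (6 * R) powr e" by (simp add: mult.assoc[symmetric])
      also have "\<dots> \<le> 6 powr \<bar>e\<bar> * norm x powr e"
        using \<open>(6 * R) powr e \<le> norm x powr e\<close> by (intro mult_left_mono) auto
      finally show ?thesis .
    qed
    then have "Cs N e * (5 powr (real N + e) * (R ^ N * R powr e)) \<le>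
        Cs N e * (5 powr (real N + e) * (R ^ N * (6 powr \<bar>e\<bar> * norm x powr e)))"
      using Cs R by (intro mult_left_mono) auto
    finally show ?thesis unfolding K3eq using t1 t2 by (simp add: algebra_simps)
  qed
qed

lemma final_ineq:
  fixes \<Phi> Lv Y I U C m :: real and N :: nat
  assumes \<Phi>: "\<Phi> > 0" and Y: "Y > 0" and I: "I > 0" and C: "C > 0" and N: "N > 0"
    and m: "0 < m" "m < 1"
    and L: "\<bar>Lv\<bar> \<le> \<Phi> powr m * Y" and IU: "I \<le> U" and YU: "Y * U powr (2 / real N) \<le> C"
  shows "\<Phi> powr (- m / (1 - m)) * \<bar>Lv\<bar> powr (1 / (1 - m)) \<le> C powr (1 / (1 - m)) * (I powr (2 / real N)) powr (- 1 / (1 - m))"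
proof -
  define p where "p = 1 / (1 - m)"
  have p: "p > 0" unfolding p_def using m by simp
  have e1: "- m / (1 - m) = - (m * p)" unfolding p_def by simp
  have e2: "- 1 / (1 - m) = - p" unfolding p_def by simp
  have "\<bar>Lv\<bar> powr p \<le> (\<Phi> powr m * Y) powr p" using L p by (intro powr_mono2) auto
  also have "\<dots> = \<Phi> powr (m * p) * Y powr p" by (simp add: powr_mult powr_powr)
  finally have a: "\<bar>Lv\<bar> powr p \<le> \<Phi> powr (m * p) * Y powr p" .
  have "\<Phi> powr (- (m * p)) * \<bar>Lv\<bar> powr p \<le> \<Phi> powr (- (m * p)) * (\<Phi> powr (m * p) * Y powr p)"
    by (rule mult_left_mono[OF a]) simp
  also have "\<dots> = Y powr p" using \<Phi> by (simp add: powr_add[symmetric] mult.assoc[symmetric])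
  finally have b: "\<Phi> powr (- (m * p)) * \<bar>Lv\<bar> powr p \<le> Y powr p" .
  define \<rho> where "\<rho> = I powr (2 / real N)"
  have \<rho>: "\<rho> > 0" unfolding \<rho>_def using I by simp
  have "\<rho> \<le> U powr (2 / real N)" unfolding \<rho>_def using IU I by (intro powr_mono2) auto
  then have "Y * \<rho> \<le> Y * U powr (2 / real N)" using Y by (intro mult_left_mono) auto
  then have "Y * \<rho> \<le> C" using YU by linarith
  then have "Y \<le> C / \<rho>" using \<rho> by (simp add: le_divide_eq)
  then have "Y powr p \<le> (C / \<rho>) powr p" using Y p by (intro powr_mono2) auto
  also have "\<dots> = C powr p / \<rho> powr p" by (rule powr_divide)
  also have "\<dots> = C powr p * \<rho> powr (- p)" by (simp add: powr_minus divide_inverse)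
  finally have c: "Y powr p \<le> C powr p * \<rho> powr (- p)" .
  have F: "\<Phi> powr (- (m * p)) * \<bar>Lv\<bar> powr p \<le> C powr p * \<rho> powr (- p)" using b c by linarith
  show ?thesis unfolding e1 e2 \<rho>_def[symmetric] p_def[symmetric] by (rule F)
qed

lemma U_eq:
  fixes R nx K e :: real and N :: nat
  assumes "R > 0" "nx > 0" "K > 0" "N > 0"
  shows "(K * R ^ N * nx powr e) powr (2 / real N) = K powr (2 / real N) * R\<^sup>2 * nx powr (e * 2 / real N)"
proof -
  have r1: "R ^ N = R powr (real N)" using assms(1) by (rule powr_realpow[symmetric])
  have r2: "(R powr real N) powr (2 / real N) = R powr (real N * (2 / real N))" by (rule powr_powr)
  have r3: "real N * (2 / real N) = 2" using assms(4) by simp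
  have r4: "R powr 2 = R\<^sup>2" using assms(1) by (simp add: powr_numeral)
  have r: "(R ^ N) powr (2 / real N) = R\<^sup>2" unfolding r1 r2 r3 r4 ..
  have a: "(K * R ^ N * nx powr e) powr (2 / real N) = K powr (2 / real N) * (R ^ N) powr (2 / real N) * (nx powr e) powr (2 / real N)"
    by (simp only: powr_mult)
  have b: "(nx powr e) powr (2 / real N) = nx powr (e * 2 / real N)" by (simp add: powr_powr)
  show ?thesis unfolding a b r ..
qed

lemma L_formula:
  fixes x x0 :: "real^'n" and \<phi> :: "real^'n \<Rightarrow> real"
  assumes x: "x \<noteq> 0"
    and g: "grad \<phi> x = (2 * h1) *\<^sub>R (x - x0)"
    and l: "laplacian \<phi> x = 4 * h2 * ((x - x0) \<bullet> (x - x0)) + 2 * real CARD('n) * h1"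
  shows "\<bar>L_op \<gamma> \<beta> \<phi> x\<bar> \<le> norm x powr (\<gamma> - \<beta>) *
     (4 * \<bar>h2\<bar> * ((x - x0) \<bullet> (x - x0)) + 2 * real CARD('n) * \<bar>h1\<bar> + \<bar>\<beta>\<bar> * (2 * \<bar>h1\<bar> * norm (x - x0) / norm x))"
proof -
  have nx: "norm x > 0" using x by simp
  have "(inverse ((norm x)\<^sup>2) *\<^sub>R x) \<bullet> grad \<phi> x = 2 * h1 * (x \<bullet> (x - x0)) / (norm x)\<^sup>2"
    unfolding g by (simp add: divide_inverse)
  then have ip: "\<bar>(inverse ((norm x)\<^sup>2) *\<^sub>R x) \<bullet> grad \<phi> x\<bar> \<le> 2 * \<bar>h1\<bar> * norm (x - x0) / norm x"
  proof -
    assume eq: "(inverse ((norm x)\<^sup>2) *\<^sub>R x) \<bullet> grad \<phi> x = 2 * h1 * (x \<bullet> (x - x0)) / (norm x)\<^sup>2"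
    have cs: "\<bar>x \<bullet> (x - x0)\<bar> \<le> norm x * norm (x - x0)" by (rule Cauchy_Schwarz_ineq2)
    have "\<bar>2 * h1 * (x \<bullet> (x - x0)) / (norm x)\<^sup>2\<bar> = 2 * \<bar>h1\<bar> * \<bar>x \<bullet> (x - x0)\<bar> / (norm x)\<^sup>2"
      by (simp add: abs_mult abs_divide)
    also have "\<dots> \<le> 2 * \<bar>h1\<bar> * (norm x * norm (x - x0)) / (norm x)\<^sup>2"
      using cs by (intro divide_right_mono mult_left_mono) auto
    also have "\<dots> = 2 * \<bar>h1\<bar> * norm (x - x0) / norm x" using nx by (simp add: power2_eq_square)
    finally show ?thesis unfolding eq .
  qed
  have t: "0 \<le> (x - x0) \<bullet> (x - x0)" by simp
  have lap: "\<bar>laplacian \<phi> x\<bar> \<le> 4 * \<bar>h2\<bar> * ((x - x0) \<bullet> (x - x0)) + 2 * real CARD('n) * \<bar>h1\<bar>"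
    unfolding l using t by (simp add: abs_mult abs_triangle_ineq[THEN order_trans])
  have "\<bar>laplacian \<phi> x - \<beta> * ((inverse ((norm x)\<^sup>2) *\<^sub>R x) \<bullet> grad \<phi> x)\<bar>
      \<le> \<bar>laplacian \<phi> x\<bar> + \<bar>\<beta>\<bar> * \<bar>(inverse ((norm x)\<^sup>2) *\<^sub>R x) \<bullet> grad \<phi> x\<bar>"
    by (simp add: abs_mult abs_triangle_ineq4[THEN order_trans])
  also have "\<dots> \<le> (4 * \<bar>h2\<bar> * ((x - x0) \<bullet> (x - x0)) + 2 * real CARD('n) * \<bar>h1\<bar>) + \<bar>\<beta>\<bar> * (2 * \<bar>h1\<bar> * norm (x - x0) / norm x)"
    using lap ip by (intro add_mono mult_left_mono) auto
  finally have inner: "\<bar>laplacian \<phi> x - \<beta> * ((inverse ((norm x)\<^sup>2) *\<^sub>R x) \<bullet> grad \<phi> x)\<bar> \<le>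
     4 * \<bar>h2\<bar> * ((x - x0) \<bullet> (x - x0)) + 2 * real CARD('n) * \<bar>h1\<bar> + \<bar>\<beta>\<bar> * (2 * \<bar>h1\<bar> * norm (x - x0) / norm x)" .
  have ab: "\<bar>norm x powr (\<gamma> - \<beta>)\<bar> = norm x powr (\<gamma> - \<beta>)" by simp
  show ?thesis unfolding L_op_def abs_mult ab
    by (rule mult_left_mono[OF inner]) simp
qed

definition KK :: "nat \<Rightarrow> real \<Rightarrow> nat \<Rightarrow> real" where
  "KK k \<beta> N = 64 * (real k * (real (k-1) * 96 * 96 + 6144)) + 4 * real N * (real k * 96)
      + 40 * \<bar>\<beta>\<bar> * (real k * 96)"

lemma KK_pos: "0 < k \<Longrightarrow> KK k \<beta> N > 0"
  unfolding KK_def by (intro add_pos_nonneg) auto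

lemma construct:
  fixes x0 :: "real^'n" and R m \<beta> \<gamma> :: real and k :: nat
  assumes R: "R > 0" and k3: "3 \<le> k" and km: "real k * m \<le> real k - 2" and m: "0 < m"
  shows "\<exists>\<phi>::real^'n \<Rightarrow> real. C2 \<phi> \<and>
       closure {x. \<phi> x \<noteq> 0} \<subseteq> ball x0 (2 * R) \<and>
       (\<forall>x\<in>ball x0 R. \<phi> x = 1) \<and>
       (\<forall>x. 0 \<le> \<phi> x \<and> \<phi> x \<le> 1) \<and>
       (\<forall>x. x \<noteq> 0 \<longrightarrow> L_op \<gamma> \<beta> \<phi> x \<noteq> 0 \<longrightarrow>
          \<phi> x > 0 \<and> R / 5 \<le> norm x \<and> norm (x - x0) \<le> 2 * R \<and>
          \<bar>L_op \<gamma> \<beta> \<phi> x\<bar> \<le> \<phi> x powr m * (KK k \<beta> CARD('n) * norm x powr (\<gamma> - \<beta>) / R\<^sup>2))"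
proof -
  define a where "a = (if norm x0 \<ge> 3 * R / 2 then R else 17 * R / 10)"
  define b where "b = a + R / 4"
  define A where "A = a\<^sup>2"
  define B where "B = b\<^sup>2"
  have a1: "R \<le> a" "a \<le> 17 * R / 10" unfolding a_def using R by auto
  have b1: "b < 2 * R" unfolding b_def using a1 R by linarith
  have apos: "a > 0" using a1 R by linarith
  have AB: "A < B" unfolding A_def B_def b_def using apos R by (simp add: power_strict_mono)
  have BA: "B - A \<ge> R\<^sup>2 / 2"
  proof -
    have "B - A = (R / 4) * (2 * a + R / 4)" unfolding A_def B_def b_def by (simp add: power2_eq_square algebra_simps)
    also have "\<dots> \<ge> (R / 4) * (2 * R)" using a1 R by (intro mult_left_mono) auto
    finally show ?thesis by (simp add: power2_eq_square)
  qed
  have B4: "B \<le> 4 * R\<^sup>2"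
  proof -
    have "b\<^sup>2 \<le> (2 * R)\<^sup>2" using b1 apos R unfolding b_def by (intro power_mono) auto
    then show ?thesis unfolding B_def by (simp add: power2_eq_square)
  qed
  have geo: "R / 5 \<le> norm x" if "a < norm (x - x0)" "norm (x - x0) < b" for x
  proof (cases "norm x0 \<ge> 3 * R / 2")
    case True
    then have "a = R" unfolding a_def by simp
    then have "norm (x - x0) < 5 * R / 4" using that unfolding b_def by simp
    moreover have "norm x0 \<le> norm x + norm (x - x0)" using norm_triangle_ineq[of x "x0 - x"] by (simp add: norm_minus_commute)
    ultimately show ?thesis using True R by linarith
  next
    case False
    then have "a = 17 * R / 10" unfolding a_def by simp
    moreover have "norm (x - x0) \<le> norm x + norm x0" using norm_triangle_ineq4[of x x0] by simp
    ultimately show ?thesis using False that by linarith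
  qed
  define \<phi> where "\<phi> = (\<lambda>y::real^'n. Hf k A B ((y - x0) \<bullet> (y - x0)))"
  have k2: "2 \<le> k" using k3 by simp
  note rc = radial_calc[of "Hf k A B" "Hf1 k A B" "Hf2 k A B" x0, OF Hf_deriv[OF AB k2] Hf1_deriv[OF AB k2] Hf2_cont[OF AB],
      folded \<phi>_def]
  have tn: "(y - x0) \<bullet> (y - x0) = (norm (y - x0))\<^sup>2" for y by (simp add: power2_norm_eq_inner)
  have \<phi>_eq: "\<phi> y = qf (sig A B ((norm (y - x0))\<^sup>2)) ^ k" for y unfolding \<phi>_def Hf_def tn ..
  have sig_lt: "sig A B t < 0 \<longleftrightarrow> t < A" "sig A B t \<ge> 1 \<longleftrightarrow> t \<ge> B" "sig A B t \<le> 0 \<longleftrightarrow> t \<le> A" for t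
    unfolding sig_def using AB by (auto simp: divide_less_0_iff le_divide_eq divide_le_0_iff)
  have C2: "C2 \<phi>" by (rule rc(4))
  have supp: "closure {x. \<phi> x \<noteq> 0} \<subseteq> ball x0 (2 * R)"
  proof -
    have "{x. \<phi> x \<noteq> 0} \<subseteq> cball x0 b"
    proof
      fix x assume "x \<in> {x. \<phi> x \<noteq> 0}"
      then have ne: "\<phi> x \<noteq> 0" by simp
      show "x \<in> cball x0 b"
      proof (rule ccontr)
        assume "x \<notin> cball x0 b"
        then have "b < norm (x - x0)" by (simp add: dist_norm norm_minus_commute)
        then have "b\<^sup>2 \<le> (norm (x - x0))\<^sup>2" using apos R unfolding b_def by (intro power_mono) auto
        then have "sig A B ((norm (x - x0))\<^sup>2) \<ge> 1" using sig_lt(2) unfolding B_def by simp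
        then have "\<phi> x = 0" unfolding \<phi>_eq using qf_props(4) k3 by simp
        then show False using ne by simp
      qed
    qed
    then have "closure {x. \<phi> x \<noteq> 0} \<subseteq> cball x0 b" by (rule closure_minimal) simp
    also have "cball x0 b \<subseteq> ball x0 (2 * R)" using b1 by auto
    finally show ?thesis .
  qed
  have one: "\<forall>x\<in>ball x0 R. \<phi> x = 1"
  proof
    fix x assume "x \<in> ball x0 R"
    then have "norm (x - x0) < R" by (simp add: dist_norm norm_minus_commute)
    then have "(norm (x - x0))\<^sup>2 < R\<^sup>2" by (simp add: power_strict_mono)
    also have "R\<^sup>2 \<le> A" unfolding A_def using a1 R by (intro power_mono) auto
    finally have "sig A B ((norm (x - x0))\<^sup>2) < 0" using sig_lt(1) by simp
    then show "\<phi> x = 1" unfolding \<phi>_eq using qf_props(3) by simp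
  qed
  have range: "\<forall>x. 0 \<le> \<phi> x \<and> \<phi> x \<le> 1"
    unfolding \<phi>_eq using qf_props(1,2) by (auto intro: power_le_one)
  have main: "\<phi> x > 0 \<and> R / 5 \<le> norm x \<and> norm (x - x0) \<le> 2 * R \<and>
          \<bar>L_op \<gamma> \<beta> \<phi> x\<bar> \<le> \<phi> x powr m * (KK k \<beta> CARD('n) * norm x powr (\<gamma> - \<beta>) / R\<^sup>2)"
    if x: "x \<noteq> 0" and L: "L_op \<gamma> \<beta> \<phi> x \<noteq> 0" for x
  proof -
    define t where "t = (x - x0) \<bullet> (x - x0)"
    define h1 where "h1 = Hf1 k A B t"
    define h2 where "h2 = Hf2 k A B t"
    define q where "q = qf (sig A B t)"
    have gx: "grad \<phi> x = (2 * h1) *\<^sub>R (x - x0)" unfolding rc(1) h1_def t_def ..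
    have lx: "laplacian \<phi> x = 4 * h2 * ((x - x0) \<bullet> (x - x0)) + 2 * real CARD('n) * h1"
      unfolding rc(3) h1_def h2_def t_def ..
    note LF = L_formula[OF x gx lx, of \<gamma> \<beta>]
    have sig01: "0 < sig A B t \<and> sig A B t < 1"
    proof (rule ccontr)
      assume "\<not> (0 < sig A B t \<and> sig A B t < 1)"
      then have "sig A B t \<le> 0 \<or> sig A B t \<ge> 1" by linarith
      then have "h1 = 0" "h2 = 0" unfolding h1_def h2_def using Hf_zero[OF AB] by auto
      then have "\<bar>L_op \<gamma> \<beta> \<phi> x\<bar> \<le> 0" using LF by simp
      then show False using L by simp
    qed
    have tA: "A < t" "t < B" using sig01 sig_lt(2,3)[of t] by linarith+
    have t_eq: "t = (norm (x - x0))\<^sup>2" unfolding t_def tn ..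
    have "a\<^sup>2 < (norm (x - x0))\<^sup>2" using tA(1) unfolding t_eq A_def .
    then have nA: "a < norm (x - x0)" by (rule power_less_imp_less_base) simp
    have "(norm (x - x0))\<^sup>2 < b\<^sup>2" using tA(2) unfolding t_eq B_def .
    then have nB: "norm (x - x0) < b" by (rule power_less_imp_less_base) (use apos R in \<open>simp add: b_def\<close>)
    have nx: "R / 5 \<le> norm x" by (rule geo[OF nA nB])
    have nx0: "norm (x - x0) \<le> 2 * R" using nB b1 by linarith
    have xpos: "norm x > 0" using x by simp
    have q: "0 < q" "q \<le> 1" unfolding q_def using qf_props(2,5) sig01 by auto
    have \<phi>x: "\<phi> x = q ^ k" unfolding \<phi>_eq q_def t_eq ..
    have \<phi>pos: "\<phi> x > 0" using q \<phi>x by simp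
    define q' where "q' = q ^ (k - 2)"
    have q': "0 \<le> q'" unfolding q'_def using q by simp
    have q'm: "q' \<le> \<phi> x powr m"
    proof -
      have "q' = q powr (real (k - 2))" unfolding q'_def using q by (simp add: powr_realpow)
      also have "\<dots> \<le> q powr (real k * m)" using q km k3 by (intro powr_mono') (auto simp: of_nat_diff)
      also have "\<dots> = \<phi> x powr m" unfolding \<phi>x using q by (simp add: powr_realpow[symmetric] powr_powr)
      finally show ?thesis .
    qed
    define M1 where "M1 = real k * 96"
    define M2 where "M2 = real k * (real (k-1) * 96 * 96 + 6144)"
    have M: "0 \<le> M1" "0 \<le> M2" unfolding M1_def M2_def by auto
    have R2: "R\<^sup>2 > 0" using R by simp
    have hb1: "\<bar>h1\<bar> \<le> 2 * M1 * q' / R\<^sup>2"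
    proof -
      have "\<bar>h1\<bar> \<le> M1 * q' / (B - A)" using Hf_bounds(1)[OF AB k3, of t]
        unfolding h1_def M1_def q'_def q_def by simp
      also have "\<dots> \<le> M1 * q' / (R\<^sup>2 / 2)" using BA R2 M q' AB by (intro divide_left_mono mult_nonneg_nonneg mult_pos_pos) auto
      finally show ?thesis by (simp add: mult_ac)
    qed
    have hb2: "\<bar>h2\<bar> \<le> 4 * M2 * q' / (R\<^sup>2)\<^sup>2"
    proof -
      have "\<bar>h2\<bar> \<le> M2 * q' / (B - A)\<^sup>2" using Hf_bounds(2)[OF AB k3, of t]
        unfolding h2_def M2_def q'_def q_def by simp
      also have "\<dots> \<le> M2 * q' / ((R\<^sup>2 / 2)\<^sup>2)" using BA R2 M q'
        by (intro divide_left_mono mult_nonneg_nonneg power_mono mult_pos_pos) auto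
      finally show ?thesis by (simp add: power2_eq_square mult_ac)
    qed
    have t4: "t \<le> 4 * R\<^sup>2" "0 \<le> t" using tA B4 unfolding t_def by auto
    have ratio: "norm (x - x0) / norm x \<le> 10"
      using nx nx0 xpos R by (simp add: divide_le_eq)
    have T1: "4 * \<bar>h2\<bar> * t \<le> 64 * M2 * q' / R\<^sup>2"
    proof -
      have "4 * \<bar>h2\<bar> * t \<le> 4 * (4 * M2 * q' / (R\<^sup>2)\<^sup>2) * (4 * R\<^sup>2)"
        using hb2 t4 by (intro mult_mono) auto
      also have "\<dots> = 64 * M2 * q' / R\<^sup>2" using R2 by (simp add: power2_eq_square field_simps)
      finally show ?thesis .
    qed
    have T2: "2 * real CARD('n) * \<bar>h1\<bar> \<le> 4 * real CARD('n) * M1 * q' / R\<^sup>2"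
    proof -
      have "2 * real CARD('n) * \<bar>h1\<bar> \<le> 2 * real CARD('n) * (2 * M1 * q' / R\<^sup>2)"
        using hb1 by (intro mult_left_mono) auto
      then show ?thesis by simp
    qed
    have T3: "\<bar>\<beta>\<bar> * (2 * \<bar>h1\<bar> * norm (x - x0) / norm x) \<le> 40 * \<bar>\<beta>\<bar> * M1 * q' / R\<^sup>2"
    proof -
      have "2 * \<bar>h1\<bar> * norm (x - x0) / norm x = 2 * \<bar>h1\<bar> * (norm (x - x0) / norm x)" by simp
      also have "\<dots> \<le> 2 * (2 * M1 * q' / R\<^sup>2) * 10"
        using hb1 ratio by (intro mult_mono) auto
      finally have "2 * \<bar>h1\<bar> * norm (x - x0) / norm x \<le> 40 * M1 * q' / R\<^sup>2" by simp
      then have "\<bar>\<beta>\<bar> * (2 * \<bar>h1\<bar> * norm (x - x0) / norm x) \<le> \<bar>\<beta>\<bar> * (40 * M1 * q' / R\<^sup>2)"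
        by (intro mult_left_mono) auto
      then show ?thesis by (simp add: mult_ac)
    qed
    have sumb: "4 * \<bar>h2\<bar> * t + 2 * real CARD('n) * \<bar>h1\<bar> + \<bar>\<beta>\<bar> * (2 * \<bar>h1\<bar> * norm (x - x0) / norm x)
        \<le> KK k \<beta> CARD('n) * q' / R\<^sup>2"
    proof -
      have "KK k \<beta> CARD('n) * q' / R\<^sup>2 = 64 * M2 * q' / R\<^sup>2 + 4 * real CARD('n) * M1 * q' / R\<^sup>2 + 40 * \<bar>\<beta>\<bar> * M1 * q' / R\<^sup>2"
        unfolding KK_def M1_def M2_def using R by (simp add: field_simps)
      then show ?thesis using T1 T2 T3 by linarith
    qed
    have "\<bar>L_op \<gamma> \<beta> \<phi> x\<bar> \<le> norm x powr (\<gamma> - \<beta>) * (KK k \<beta> CARD('n) * q' / R\<^sup>2)"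
      using LF sumb unfolding t_def[symmetric] by (meson mult_left_mono powr_ge_zero order_trans)
    also have "\<dots> \<le> norm x powr (\<gamma> - \<beta>) * (KK k \<beta> CARD('n) * \<phi> x powr m / R\<^sup>2)"
      using q'm KK_pos[of k \<beta> "CARD('n)"] k3 R2
      by (intro mult_left_mono divide_right_mono) auto
    also have "\<dots> = \<phi> x powr m * (KK k \<beta> CARD('n) * norm x powr (\<gamma> - \<beta>) / R\<^sup>2)" by simp
    finally show ?thesis using \<phi>pos nx nx0 by simp
  qed
  show ?thesis
    by (rule exI[of _ \<phi>]) (use C2 supp one range main in blast)
qed

theorem lemma5p5:
  fixes \<gamma> \<beta> m :: real
  assumes N3: "CARD('n) \<ge> 3"
    and m: "0 < m" "m < 1"
    and g: "\<gamma> < real CARD('n)"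
    and b1: "\<gamma> - 2 < \<beta>"
    and b2: "\<beta> \<le> (real CARD('n) - 2) / real CARD('n) * \<gamma>"
  shows "\<exists>\<kappa>>0. \<forall>(x0::real^'n) R. R > 0 \<longrightarrow>
    (\<exists>\<phi>::real^'n \<Rightarrow> real. C2 \<phi> \<and>
       closure {x. \<phi> x \<noteq> 0} \<subseteq> ball x0 (2 * R) \<and>
       (\<forall>x\<in>ball x0 R. \<phi> x = 1) \<and>
       (\<forall>x. 0 \<le> \<phi> x \<and> \<phi> x \<le> 1) \<and>
       (\<forall>x. x \<noteq> 0 \<longrightarrow> L_op \<gamma> \<beta> \<phi> x \<noteq> 0 \<longrightarrow>
          \<phi> x > 0 \<and>
          \<phi> x powr (- m / (1 - m)) * \<bar>L_op \<gamma> \<beta> \<phi> x\<bar> powr (1 / (1 - m))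
            \<le> \<kappa> * (rho \<gamma> \<beta> x0 R) powr (- 1 / (1 - m))))"
proof -
  define N where "N = CARD('n)"
  have Npos: "N > 0" unfolding N_def by simp
  define e where "e = (\<beta> - \<gamma>) * real N / 2"
  have e1: "- real CARD('n) < e"
  proof -
    have "(\<beta> - \<gamma>) * real N > -2 * real N" using b1 Npos by (intro mult_strict_right_mono) auto
    then show ?thesis unfolding e_def N_def by simp
  qed
  define k :: nat where "k = nat \<lceil>2 / (1 - m)\<rceil> + 3"
  have k3: "3 \<le> k" unfolding k_def by simp
  have km: "real k * m \<le> real k - 2"
  proof -
    have "2 / (1 - m) \<le> real k" unfolding k_def by linarith
    then have "2 \<le> real k * (1 - m)" using m by (simp add: divide_le_eq)
    then show ?thesis by (simp add: algebra_simps)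
  qed
  define K1 where "K1 = KK k \<beta> CARD('n)"
  have K1: "K1 > 0" unfolding K1_def using k3 by (intro KK_pos) simp
  define K3v where "K3v = K3 CARD('n) e"
  have K3v: "K3v > 0"
  proof -
    have "0 < unit_ball_vol (real CARD('n)) * 16 powr \<bar>e\<bar>" by simp
    moreover have "0 \<le> unit_ball_vol (real CARD('n)) * 2 powr \<bar>e\<bar>" by simp
    moreover have "0 \<le> Cs CARD('n) e * 5 powr (real CARD('n) + e) * 6 powr \<bar>e\<bar>"
      using Cs_nonneg[OF e1] by simp
    ultimately show ?thesis unfolding K3v_def K3_def by linarith
  qed
  define C where "C = K1 * K3v powr (2 / real N)"
  have C: "C > 0" unfolding C_def using K1 K3v by simp
  show ?thesis
  proof (intro exI[of _ "C powr (1 / (1 - m))"] conjI allI impI)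
    show "C powr (1 / (1 - m)) > 0" using C by simp
    fix x0 :: "real^'n" and R :: real
    assume R: "R > 0"
    obtain \<phi> :: "real^'n \<Rightarrow> real" where
      P: "C2 \<phi>" "closure {x. \<phi> x \<noteq> 0} \<subseteq> ball x0 (2 * R)" "\<forall>x\<in>ball x0 R. \<phi> x = 1"
         "\<forall>x. 0 \<le> \<phi> x \<and> \<phi> x \<le> 1"
      and Q: "\<And>x. x \<noteq> 0 \<Longrightarrow> L_op \<gamma> \<beta> \<phi> x \<noteq> 0 \<Longrightarrow>
          \<phi> x > 0 \<and> R / 5 \<le> norm x \<and> norm (x - x0) \<le> 2 * R \<and>
          \<bar>L_op \<gamma> \<beta> \<phi> x\<bar> \<le> \<phi> x powr m * (K1 * norm x powr (\<gamma> - \<beta>) / R\<^sup>2)"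
      using construct[OF R k3 km m(1), of x0 \<gamma> \<beta>] unfolding K1_def by blast
    have rho_eq: "rho \<gamma> \<beta> x0 R = integral (ball x0 R) (\<lambda>y. norm y powr e) powr (2 / real N)"
      unfolding rho_def e_def N_def ..
    have Ipos: "integral (ball x0 R) (\<lambda>y. norm y powr e) > 0" by (rule I_pos[OF e1 R])
    have P4: "\<And>x. 0 \<le> \<phi> x" "\<And>x. \<phi> x \<le> 1" using P(4) by auto
    show "\<exists>\<phi>::real^'n \<Rightarrow> real. C2 \<phi> \<and>
       closure {x. \<phi> x \<noteq> 0} \<subseteq> ball x0 (2 * R) \<and>
       (\<forall>x\<in>ball x0 R. \<phi> x = 1) \<and>
       (\<forall>x. 0 \<le> \<phi> x \<and> \<phi> x \<le> 1) \<and>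
       (\<forall>x. x \<noteq> 0 \<longrightarrow> L_op \<gamma> \<beta> \<phi> x \<noteq> 0 \<longrightarrow>
          \<phi> x > 0 \<and>
          \<phi> x powr (- m / (1 - m)) * \<bar>L_op \<gamma> \<beta> \<phi> x\<bar> powr (1 / (1 - m))
            \<le> C powr (1 / (1 - m)) * (rho \<gamma> \<beta> x0 R) powr (- 1 / (1 - m)))"
    proof (intro exI[of _ \<phi>] conjI allI impI P P4)
      fix x :: "real^'n" assume x: "x \<noteq> 0" and L: "L_op \<gamma> \<beta> \<phi> x \<noteq> 0"
      note q = Q[OF x L]
      show "\<phi> x > 0" using q by simp
      have xpos: "norm x > 0" using x by simp
      define Y where "Y = K1 * norm x powr (\<gamma> - \<beta>) / R\<^sup>2"
      have Y: "Y > 0" unfolding Y_def using K1 xpos R by simp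
      define U where "U = K3v * R ^ N * norm x powr e"
      have IU: "integral (ball x0 R) (\<lambda>y. norm y powr e) \<le> U"
        unfolding U_def K3v_def N_def using I_upper[OF e1 R, of x x0] q by simp
      have YU: "Y * U powr (2 / real N) \<le> C"
      proof -
        have "U powr (2 / real N) = K3v powr (2 / real N) * R\<^sup>2 * norm x powr (e * 2 / real N)"
          unfolding U_def by (rule U_eq[OF R xpos K3v Npos])
        moreover have "e * 2 / real N = \<beta> - \<gamma>" unfolding e_def using Npos by simp
        moreover have "norm x powr (\<gamma> - \<beta>) * norm x powr (\<beta> - \<gamma>) = 1"
          using xpos by (simp add: powr_add[symmetric])
        ultimately have "Y * U powr (2 / real N) = K1 * K3v powr (2 / real N) * (norm x powr (\<gamma> - \<beta>) * norm x powr (\<beta> - \<gamma>))"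
          unfolding Y_def using R by (simp add: field_simps)
        also have "\<dots> = C" unfolding C_def using \<open>norm x powr (\<gamma> - \<beta>) * norm x powr (\<beta> - \<gamma>) = 1\<close> by simp
        finally show ?thesis by simp
      qed
      show "\<phi> x powr (- m / (1 - m)) * \<bar>L_op \<gamma> \<beta> \<phi> x\<bar> powr (1 / (1 - m))
            \<le> C powr (1 / (1 - m)) * (rho \<gamma> \<beta> x0 R) powr (- 1 / (1 - m))"
        unfolding rho_eq
        by (rule final_ineq[OF _ Y Ipos C Npos m _ IU YU]) (use q Y_def in auto)
    qed
  qed
qed

end
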